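(* For all integers $k\geq 1$ and $n\geq \frac{1}{2}\left(\binom{2k}{k}-2\right)k^2$, $$f_2(n,k)\geq \left\lfloor \frac{n}{k}\right\rfloor+\binom{2k}{k}\frac{k}{2}-k.$$
   Context: For a set $A$ and integer $k\ge1$, the Kneser graph $KG(A,k)$ has vertex set the family of all $k$-element subsets of $A$, two vertices $X,Y$ being adjacent iff $X\cap Y=\emptyset$; $KG(n,k)$ denotes a Kneser graph with an $n$-element base set. The xor-product $G\cdot H$ of graphs $G,H$ has vertex set $V(G)\times V(H)$, and $(g,h)$, $(g',h')$ are adjacent iff exactly one of the following holds: $gg'\in E(G)$, $hh'\in E(H)$. $f_\ell(n,k)$ denotes the clique number of the xor-product of $\ell$ copies of $KG(n,k)$. Equivalently, $f_\ell(n,k)$ is the maximum size of a family $\mathcal S$ of subsets of $A_1\cup\dots\cup A_\ell$, where $A_1,\dots,A_\ell$ are pairwise disjoint $n$-element sets, such that $|S\cap A_i|=k$ for all $S\in\mathcal S$ and all $i$, and for any two distinct $S,T\in\mathcal S$ the number of indices $i\in\{1,\dots,\ell\}$ with $S\cap T\cap A_i=\emptyset$ is odd (an "$\ell$-semi-intersecting family with parameters $n$ and $k$"). *)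

theory Defs
  imports Complex_Main
begin

record 'a sgraph =
  verts :: "'a set"
  adj :: "'a \<Rightarrow> 'a \<Rightarrow> bool"

definition kneser :: "'a set \<Rightarrow> nat \<Rightarrow> 'a set sgraph" where
  "kneser A k = \<lparr> verts = {X. X \<subseteq> A \<and> card X = k},
                   adj = (\<lambda>X Y. X \<inter> Y = {}) \<rparr>"

definition xor_prod :: "'a sgraph \<Rightarrow> 'b sgraph \<Rightarrow> ('a \<times> 'b) sgraph" where
  "xor_prod G H = \<lparr> verts = verts G \<times> verts H,
     adj = (\<lambda>(g,h) (g',h'). adj G g g' \<noteq> adj H h h') \<rparr>"

text \<open>Xor-product of l copies of G, with vertices represented as lists of length l
  (the list x # xs corresponds to the pair (x, xs) in G . (G^l)); the product of
  zero copies is the one-vertex graph with no edges.\<close>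
fun xor_power :: "'a sgraph \<Rightarrow> nat \<Rightarrow> 'a list sgraph" where
  "xor_power G 0 = \<lparr> verts = {[]}, adj = (\<lambda>_ _. False) \<rparr>"
| "xor_power G (Suc l) =
     \<lparr> verts = {x # xs | x xs. x \<in> verts G \<and> xs \<in> verts (xor_power G l)},
       adj = (\<lambda>u v. adj G (hd u) (hd v) \<noteq> adj (xor_power G l) (tl u) (tl v)) \<rparr>"

definition is_clique :: "'a sgraph \<Rightarrow> 'a set \<Rightarrow> bool" where
  "is_clique G C \<longleftrightarrow> C \<subseteq> verts G \<and> (\<forall>x\<in>C. \<forall>y\<in>C. x \<noteq> y \<longrightarrow> adj G x y)"

definition clique_number :: "'a sgraph \<Rightarrow> nat" where
  "clique_number G = Sup {card C | C. finite C \<and> is_clique G C}"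

definition f :: "nat \<Rightarrow> nat \<Rightarrow> nat \<Rightarrow> nat" where
  "f l n k = clique_number (xor_power (kneser {0..<n} k) l)"

end

theory Submission imports Defs begin

definition blk :: "nat \<Rightarrow> nat \<Rightarrow> nat set" where
  "blk k b = {b*k..<b*k+k}"
definition col :: "nat \<Rightarrow> nat \<Rightarrow> nat \<Rightarrow> nat set" where
  "col k j s = (\<lambda>t. (j*k+t)*k+s) ` {..<k}"

lemma mem_blk: "k > 0 \<Longrightarrow> x \<in> blk k b \<longleftrightarrow> x div k = b"
proof
  assume k: "k > 0" and "x \<in> blk k b"
  then have "b*k \<le> x" "x < b*k+k" by (auto simp: blk_def)
  then show "x div k = b" using k
    by (metis add.commute div_nat_eqI mult.commute mult_Suc_right)
next
  assume k: "k > 0" and "x div k = b"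
  moreover have "x = x div k * k + x mod k" by simp
  moreover have "x mod k < k" using k by simp
  ultimately show "x \<in> blk k b" unfolding blk_def
    by (metis atLeastLessThan_iff le_add1 nat_add_left_cancel_less)
qed

lemma card_blk: "card (blk k b) = k" by (simp add: blk_def)

lemma mem_col: "s < k \<Longrightarrow> x \<in> col k j s \<longleftrightarrow> x mod k = s \<and> x div k div k = j"
proof
  assume s: "s < k" and "x \<in> col k j s"
  then obtain t where t: "t < k" "x = (j*k+t)*k+s" by (auto simp: col_def)
  then show "x mod k = s \<and> x div k div k = j" using s by simp
next
  assume s: "s < k" and h: "x mod k = s \<and> x div k div k = j"
  define t where "t = x div k mod k"
  have "t < k" using s unfolding t_def by simp
  moreover have "x = (j*k+t)*k+s" using h unfolding t_def
    by (metis div_mult_mod_eq mult.commute)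
  ultimately show "x \<in> col k j s" unfolding col_def by auto
qed

lemma card_col: "card (col k j s) = k"
proof -
  have "inj_on (\<lambda>t. (j*k+t)*k+s) {..<k}"
    by (rule inj_onI) auto
  then show ?thesis unfolding col_def by (simp add: card_image)
qed

lemma blk_bound: "k > 0 \<Longrightarrow> x \<in> blk k b \<Longrightarrow> x < (b+1)*k"
  by (auto simp: blk_def)

lemma col_bound: "x \<in> col k j s \<Longrightarrow> s < k \<Longrightarrow> x < (j*k+k)*k"
proof -
  assume "x \<in> col k j s" "s < k"
  then obtain t where t: "t < k" "x = (j*k+t)*k+s" by (auto simp: col_def)
  have "(j*k+t)*k+s < (j*k+t)*k+k" using \<open>s<k\<close> by simp
  also have "\<dots> = (j*k+t+1)*k" by simp
  also have "\<dots> \<le> (j*k+k)*k" using t by (intro mult_le_mono1) simp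
  finally show ?thesis using t by simp
qed

lemma xp2_verts: "verts (xor_power G 2) = {[a,b] | a b. a \<in> verts G \<and> b \<in> verts G}"
  by (auto simp: numeral_2_eq_2)

lemma xp2_adj: "adj (xor_power G 2) [a,b] [c,d] = (adj G a c \<noteq> adj G b d)"
  by (simp add: numeral_2_eq_2)

lemma clique_le: "finite (verts G) \<Longrightarrow> is_clique G C \<Longrightarrow> card C \<le> clique_number G"
  unfolding clique_number_def
proof (rule cSup_upper)
  assume "finite (verts G)" "is_clique G C"
  then show "card C \<in> {card C |C. finite C \<and> is_clique G C}"
    using finite_subset is_clique_def by blast
  show "bdd_above {card C |C. finite C \<and> is_clique G C}"
    by (rule bdd_aboveI[of _ "card (verts G)"])
      (use \<open>finite (verts G)\<close> in \<open>auto simp: is_clique_def intro: card_mono\<close>)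
qed

lemma kneser_verts: "verts (kneser A k) = {X. X \<subseteq> A \<and> card X = k}"
  by (simp add: kneser_def)
lemma kneser_adj: "adj (kneser A k) X Y = (X \<inter> Y = {})"
  by (simp add: kneser_def)

lemma fin_verts: fixes n k :: nat shows "finite (verts (xor_power (kneser {0..<n} k) 2))"
proof -
  have "verts (xor_power (kneser {0..<n} k) 2) \<subseteq> (\<lambda>(a,b). [a,b]) ` (Pow {0..<n} \<times> Pow {0..<n})"
    by (auto simp: xp2_verts kneser_verts)
  moreover have "finite (Pow {0..<n} \<times> Pow {0..<n})"
    by (intro finite_cartesian_product) auto
  ultimately show ?thesis using finite_subset finite_imageI by metis
qed

lemma card_Yf:
  assumes "k \<ge> (1::nat)"
  shows "card {Y. Y \<subseteq> {0..<2*k} \<and> card Y = k \<and> 0 \<in> Y} = (2*k-1) choose (k-1)"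
proof -
  have eq: "{Y. Y \<subseteq> {0..<2*k} \<and> card Y = k \<and> 0 \<in> Y}
      = insert 0 ` {Z. Z \<subseteq> {1..<2*k} \<and> card Z = k-1}"
  proof
    show "{Y. Y \<subseteq> {0..<2*k} \<and> card Y = k \<and> 0 \<in> Y} \<subseteq> insert 0 ` {Z. Z \<subseteq> {1..<2*k} \<and> card Z = k-1}"
    proof
      fix Y assume Y: "Y \<in> {Y. Y \<subseteq> {0..<2*k} \<and> card Y = k \<and> 0 \<in> Y}"
      then have fY: "finite Y" using finite_subset by blast
      have "Y = insert 0 (Y - {0})" using Y by auto
      moreover have "Y - {0} \<subseteq> {1..<2*k}" using Y by auto
      moreover have "card (Y - {0}) = k - 1" using Y fY by (simp add: card_Diff_singleton)
      ultimately show "Y \<in> insert 0 ` {Z. Z \<subseteq> {1..<2*k} \<and> card Z = k-1}" by blast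
    qed
    show "insert 0 ` {Z. Z \<subseteq> {1..<2*k} \<and> card Z = k-1} \<subseteq> {Y. Y \<subseteq> {0..<2*k} \<and> card Y = k \<and> 0 \<in> Y}"
    proof
      fix Y assume "Y \<in> insert 0 ` {Z. Z \<subseteq> {1..<2*k} \<and> card Z = k-1}"
      then obtain Z where Z: "Z \<subseteq> {1..<2*k}" "card Z = k-1" "Y = insert 0 Z" by blast
      have "finite Z" using Z(1) finite_subset by blast
      moreover have "0 \<notin> Z" using Z(1) by auto
      ultimately have "card Y = k" using Z assms by simp
      then show "Y \<in> {Y. Y \<subseteq> {0..<2*k} \<and> card Y = k \<and> 0 \<in> Y}" using Z assms by auto
    qed
  qed
  have inj: "inj_on (insert 0) {Z. Z \<subseteq> {1..<2*k} \<and> card Z = k-1}"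
  proof (rule inj_onI)
    fix Z Z' assume "Z \<in> {Z. Z \<subseteq> {1..<2*k} \<and> card Z = k-1}" "Z' \<in> {Z. Z \<subseteq> {1..<2*k} \<and> card Z = k-1}"
      "insert 0 Z = insert (0::nat) Z'"
    moreover from this have "0 \<notin> Z" "0 \<notin> Z'" by auto
    ultimately show "Z = Z'" by (metis Diff_insert_absorb)
  qed
  have "card {Z. Z \<subseteq> {1..<2*k} \<and> card Z = k-1} = card {1..<2*k} choose (k-1)"
    by (rule n_subsets) simp
  then show ?thesis unfolding eq using inj by (simp add: card_image)
qed

lemma choose_double:
  assumes "k \<ge> (1::nat)"
  shows "(2*k) choose k = 2 * ((2*k-1) choose (k-1))"
proof -
  obtain j where j: "k = Suc j" using assms by (cases k) auto
  have "(2*k) choose k = (Suc (2*j+1)) choose (Suc j)" using j by simp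
  also have "\<dots> = ((2*j+1) choose j) + ((2*j+1) choose (Suc j))" by simp
  also have "(2*j+1) choose (Suc j) = (2*j+1) choose j"
    using binomial_symmetric[of "Suc j" "2*j+1"] by simp
  finally show ?thesis using j by simp
qed

lemma LB:
  assumes "Y \<subseteq> {0..<2*k}" "card Y = k" "Y' \<subseteq> {0..<2*k}" "card Y' = k" "Y \<noteq> Y'"
  shows "Y \<inter> ({0..<2*k} - Y') \<noteq> {}"
proof
  assume "Y \<inter> ({0..<2*k} - Y') = {}"
  then have "Y \<subseteq> Y'" using assms(1) by auto
  moreover have "finite Y'" using assms(3) finite_subset by blast
  ultimately have "Y = Y'" using card_subset_eq assms(2,4) by metis
  then show False using assms(5) by simp
qed

lemma LC:
  assumes "Y \<subseteq> {0..<2*k}" "card Y = k" "Y' \<subseteq> {0..<2*k}" "card Y' = k" "(0::nat) \<in> Y'" "0 \<in> Y"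
  shows "({0..<2*k} - Y) \<inter> ({0..<2*k} - Y') \<noteq> {}"
proof
  assume "({0..<2*k} - Y) \<inter> ({0..<2*k} - Y') = {}"
  then have sub: "{0..<2*k} - Y \<subseteq> Y'" by auto
  have "finite Y'" using assms(3) finite_subset by blast
  moreover have "card ({0..<2*k} - Y) = k" using assms(1,2) by (simp add: card_Diff_subset finite_subset)
  ultimately have "{0..<2*k} - Y = Y'" using sub assms by (metis card_subset_eq)
  then show False using assms(5,6) by auto
qed

lemma S1: "k > 0 \<Longrightarrow> blk k b \<inter> blk k b' = {} \<longleftrightarrow> b \<noteq> b'"
proof
  assume k: "k > 0" and d: "blk k b \<inter> blk k b' = {}"
  have "b*k \<in> blk k b" using k by (simp add: mem_blk)
  then show "b \<noteq> b'" using d by auto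
next
  assume k: "k > 0" and "b \<noteq> b'"
  then show "blk k b \<inter> blk k b' = {}" by (auto simp: mem_blk)
qed

lemma S2: "s < k \<Longrightarrow> s' < k \<Longrightarrow> col k j s \<inter> col k j' s' = {} \<longleftrightarrow> (j \<noteq> j' \<or> s \<noteq> s')"
proof
  assume s: "s < k" "s' < k" and d: "col k j s \<inter> col k j' s' = {}"
  have "(j*k+0)*k+s \<in> col k j s" unfolding col_def using s by force
  then show "j \<noteq> j' \<or> s \<noteq> s'" using d by auto
next
  assume s: "s < k" "s' < k" and "j \<noteq> j' \<or> s \<noteq> s'"
  then show "col k j s \<inter> col k j' s' = {}" by (auto simp: mem_col)
qed

lemma S3: "s < k \<Longrightarrow> s' < k \<Longrightarrow> blk k (j*k+s) \<inter> col k j' s' = {} \<longleftrightarrow> j \<noteq> j'"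
proof
  assume s: "s < k" "s' < k" and d: "blk k (j*k+s) \<inter> col k j' s' = {}"
  have "(j*k+s)*k+s' \<in> col k j s'" unfolding col_def using s by force
  moreover have "(j*k+s)*k+s' \<in> blk k (j*k+s)" using s by (simp add: mem_blk)
  ultimately show "j \<noteq> j'" using d by auto
next
  assume s: "s < k" "s' < k" and "j \<noteq> j'"
  then show "blk k (j*k+s) \<inter> col k j' s' = {}" by (auto simp: mem_col mem_blk)
qed

lemma S4: "s < k \<Longrightarrow> j < M \<Longrightarrow> blk k (M*k+i) \<inter> col k j s = {}"
proof (rule ccontr)
  assume s: "s < k" "j < M" and "blk k (M*k+i) \<inter> col k j s \<noteq> {}"
  then obtain x where x: "x \<in> blk k (M*k+i)" "x \<in> col k j s" by blast
  have k: "k > 0" using s by simp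
  have "x div k = M*k+i" using x(1) k by (simp add: mem_blk)
  moreover have "x div k div k = j" using x(2) s by (simp add: mem_col)
  ultimately have "(M*k+i) div k = j" by simp
  moreover have "(M*k+i) div k \<ge> M" using k by simp
  ultimately show False using s by simp
qed

lemma blk_sub: "(b+1)*k \<le> n \<Longrightarrow> blk k b \<subseteq> {0..<n}"
  by (auto simp: blk_def algebra_simps)

lemma col_sub: "s < k \<Longrightarrow> (j*k+k)*k \<le> n \<Longrightarrow> col k j s \<subseteq> {0..<n}"
proof
  fix x assume "s < k" "(j*k+k)*k \<le> n" "x \<in> col k j s"
  then have "x < (j*k+k)*k" using col_bound by blast
  then show "x \<in> {0..<n}" using \<open>(j*k+k)*k \<le> n\<close> by simp
qed

lemma enc_inj: "s < k \<Longrightarrow> s' < k \<Longrightarrow> j*k+s = j'*k+(s'::nat) \<Longrightarrow> j = j' \<and> s = s'"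
proof -
  assume a: "s < k" "s' < k" "j*k+s = j'*k+s'"
  have "j = (j*k+s) div k" using a(1) by simp
  also have "\<dots> = (j'*k+s') div k" using a(3) by simp
  also have "\<dots> = j'" using a(2) by simp
  finally have 1: "j = j'" .
  have "s = (j*k+s) mod k" using a(1) by simp
  also have "\<dots> = (j'*k+s') mod k" using a(3) by simp
  also have "\<dots> = s'" using a(2) by simp
  finally show ?thesis using 1 by simp
qed

lemma blk_inj: "k > 0 \<Longrightarrow> blk k b = blk k b' \<Longrightarrow> b = b'"
proof -
  assume k: "k > 0" and e: "blk k b = blk k b'"
  have "b*k \<in> blk k b" using k by (simp add: mem_blk)
  then have "b*k \<in> blk k b'" using e by simp
  then show "b = b'" using k by (simp add: mem_blk)
qed

lemma col_inj: "s < k \<Longrightarrow> s' < k \<Longrightarrow> col k j s = col k j' s' \<Longrightarrow> j = j' \<and> s = s'"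
proof -
  assume s: "s < k" "s' < k" and e: "col k j s = col k j' s'"
  have "(j*k+0)*k+s \<in> col k j s" unfolding col_def using s by force
  then have "(j*k+0)*k+s \<in> col k j' s'" using e by simp
  then have "((j*k+0)*k+s) mod k = s' \<and> ((j*k+0)*k+s) div k div k = j'" using s by (simp only: mem_col)
  then show ?thesis using s by simp
qed

theorem theorem1p1:
  fixes k n :: nat
  assumes "k \<ge> 1"
    and "2 * real n \<ge> (real ((2*k) choose k) - 2) * real k ^ 2"
  shows "real (f 2 n k) \<ge> real (n div k) + real ((2*k) choose k) * real k / 2 - real k"
proof -
  define B where "B = {0..<2*k}"
  define Yf where "Yf = {Y. Y \<subseteq> B \<and> card Y = k \<and> 0 \<in> Y}"
  define Y0 where "Y0 = {0..<k}"
  define M where "M = card Yf - 1"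
  have k0: "k > 0" using assms(1) by simp
  have cYf: "card Yf = (2*k-1) choose (k-1)" unfolding Yf_def B_def using card_Yf[OF assms(1)] .
  have N: "(2*k) choose k = 2 * card Yf" using choose_double[OF assms(1)] cYf by simp
  have finYf: "finite Yf"
  proof -
    have "Yf \<subseteq> Pow B" by (auto simp: Yf_def)
    then show ?thesis by (rule finite_subset) (simp add: B_def)
  qed
  have Y0Yf: "Y0 \<in> Yf" using k0 by (auto simp: Yf_def Y0_def B_def)
  have cM: "card (Yf - {Y0}) = M" using finYf Y0Yf by (simp add: M_def card_Diff_singleton)
  obtain h where h: "bij_betw h {0..<M} (Yf - {Y0})"
    using ex_bij_betw_nat_finite[of "Yf - {Y0}"] cM finYf by auto
  have hY: "h j \<in> Yf" "h j \<noteq> Y0" if "j < M" for j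
    using bij_betwE[OF h] that by auto
  have hprop: "h j \<subseteq> B" "card (h j) = k" "0 \<in> h j" if "j < M" for j
    using hY(1)[OF that] by (auto simp: Yf_def)
  have hinj: "j = j'" if "h j = h j'" "j < M" "j' < M" for j j'
    using inj_onD[OF bij_betw_imp_inj_on[OF h]] that by auto
  have "card Yf > 0" using Y0Yf finYf by (auto simp: card_gt_0_iff)
  then have cY1: "card Yf \<ge> 1" by simp
  have NM: "real ((2*k) choose k) = 2 * real M + 2" using N cY1 by (simp add: M_def)
  have nM: "M*k*k \<le> n"
  proof -
    have "2 * real n \<ge> (2*real M) * real k ^2" using assms(2) NM by simp
    moreover have "real (M*k*k) = real M * real k ^ 2" by (simp add: power2_eq_square)
    ultimately have "real (M*k*k) \<le> real n" by linarith
    then show ?thesis by linarith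
  qed
  have Mkdiv: "M*k \<le> n div k"
  proof -
    have "M*k = (M*k*k) div k" using k0 by simp
    also have "\<dots> \<le> n div k" using nM by (rule div_le_mono)
    finally show ?thesis .
  qed
  define q where "q = n div k - M*k"
  have qeq: "M*k + q = n div k" using Mkdiv q_def by simp
  have qk: "(M*k+q)*k \<le> n" using qeq by (simp add: div_times_less_eq_dividend)
  have M2: "2*k \<le> n" if "M > 0"
  proof -
    have "k \<noteq> 1"
    proof
      assume "k = 1"
      then have "card Yf = 1" using cYf by simp
      then show False using that by (simp add: M_def)
    qed
    then have "k \<ge> 2" using k0 by simp
    then have "2*k \<le> k*k" by simp
    also have "k*k \<le> M*k*k" using that by simp
    finally have "2*k \<le> M*k*k" .
    then show ?thesis using nM by (rule le_trans)
  qed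
  have ar1: "(j*k+s+1)*k \<le> n" if "j < M" "s < k" for j s
  proof -
    have "j*k+s+1 \<le> j*k+k" using that by simp
    also have "\<dots> = (j+1)*k" by simp
    also have "\<dots> \<le> M*k" using that by (intro mult_le_mono1) simp
    finally have "(j*k+s+1)*k \<le> M*k*k" by (rule mult_le_mono1)
    then show ?thesis using nM by (rule le_trans)
  qed
  have ar2: "(j*k+k)*k \<le> n" if "j < M" for j
  proof -
    have "j*k+k = (j+1)*k" by simp
    also have "\<dots> \<le> M*k" using that by (intro mult_le_mono1) simp
    finally have "(j*k+k)*k \<le> M*k*k" by (rule mult_le_mono1)
    then show ?thesis using nM by (rule le_trans)
  qed
  have ar3: "(M*k+i+1)*k \<le> n" if "i < q" for i
  proof -
    have "M*k+i+1 \<le> M*k+q" using that by simp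
    then have "(M*k+i+1)*k \<le> (M*k+q)*k" by (rule mult_le_mono1)
    then show ?thesis using qk by (rule le_trans)
  qed
  have ar4: "k \<le> n" if "i < q" for i
  proof -
    have "1 \<le> M*k+q" using that by simp
    then have "1*k \<le> (M*k+q)*k" by (rule mult_le_mono1)
    then have "k \<le> (M*k+q)*k" by simp
    then show ?thesis using qk by (rule le_trans)
  qed
  have cBh: "card (B - h j) = k" if "j < M" for j
    using hprop[OF that] by (simp add: card_Diff_subset finite_subset B_def)
  have Y0B: "Y0 \<subseteq> B" "card Y0 = k" "0 \<in> Y0" using k0 by (auto simp: Y0_def B_def)
  define C1 where "C1 = (\<lambda>(j,s). [h j, blk k (j*k+s)]) ` ({0..<M} \<times> {0..<k})"
  define C2 where "C2 = (\<lambda>(j,s). [B - h j, col k j s]) ` ({0..<M} \<times> {0..<k})"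
  define C3 where "C3 = (\<lambda>i. [Y0, blk k (M*k+i)]) ` {0..<q}"
  define C where "C = C1 \<union> C2 \<union> C3"
  define G where "G = xor_power (kneser {0..<n} k) 2"
  have adjG: "adj G [a,b] [c,d] = ((a \<inter> c = {}) \<noteq> (b \<inter> d = {}))" for a b c d
    by (simp add: G_def xp2_adj kneser_adj)
  have vertsG: "[a,b] \<in> verts G \<longleftrightarrow> a \<subseteq> {0..<n} \<and> card a = k \<and> b \<subseteq> {0..<n} \<and> card b = k"
    for a b by (auto simp: G_def xp2_verts kneser_verts)
  have cases_x: "(\<exists>j s. j<M \<and> s<k \<and> x = [h j, blk k (j*k+s)]) \<or>
      (\<exists>j s. j<M \<and> s<k \<and> x = [B - h j, col k j s]) \<or> (\<exists>i. i<q \<and> x = [Y0, blk k (M*k+i)])"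
    if xC: "x \<in> C" for x
  proof -
    consider (a) "x \<in> C1" | (b) "x \<in> C2" | (c) "x \<in> C3" using xC C_def by blast
    then show ?thesis
    proof cases
      case a
      then obtain p where p: "p \<in> {0..<M} \<times> {0..<k}" "x = (\<lambda>(j,s). [h j, blk k (j*k+s)]) p"
        unfolding C1_def by blast
      obtain j s where js: "p = (j,s)" by (cases p)
      have "j<M" "s<k" "x = [h j, blk k (j*k+s)]" using p js by auto
      then show ?thesis by blast
    next
      case b
      then obtain p where p: "p \<in> {0..<M} \<times> {0..<k}" "x = (\<lambda>(j,s). [B - h j, col k j s]) p"
        unfolding C2_def by blast
      obtain j s where js: "p = (j,s)" by (cases p)
      have "j<M" "s<k" "x = [B - h j, col k j s]" using p js by auto
      then show ?thesis by blast
    next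
      case c
      then obtain i where "i < q" "x = [Y0, blk k (M*k+i)]" unfolding C3_def by auto
      then show ?thesis by blast
    qed
  qed
  have V: "C \<subseteq> verts G"
  proof
    fix x assume "x \<in> C"
    from cases_x[OF this] show "x \<in> verts G"
    proof (elim disjE exE conjE)
      fix j s assume a: "j < M" "s < k" "x = [h j, blk k (j*k+s)]"
      have "h j \<subseteq> {0..<n}" using hprop(1)[OF a(1)] M2 a(1) by (auto simp: B_def)
      moreover have "blk k (j*k+s) \<subseteq> {0..<n}" using ar1[OF a(1,2)] by (intro blk_sub) simp
      ultimately show "x \<in> verts G" using a hprop(2)[OF a(1)] by (simp add: vertsG card_blk)
    next
      fix j s assume a: "j < M" "s < k" "x = [B - h j, col k j s]"
      have "B - h j \<subseteq> {0..<n}" using M2 a(1) by (auto simp: B_def)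
      moreover have "col k j s \<subseteq> {0..<n}" using ar2[OF a(1)] a(2) by (intro col_sub)
      ultimately show "x \<in> verts G" using a cBh[OF a(1)] by (simp add: vertsG card_col)
    next
      fix i assume a: "i < q" "x = [Y0, blk k (M*k+i)]"
      have "Y0 \<subseteq> {0..<n}" using ar4[OF a(1)] by (auto simp: Y0_def)
      moreover have "blk k (M*k+i) \<subseteq> {0..<n}" using ar3[OF a(1)] by (intro blk_sub) simp
      ultimately show "x \<in> verts G" using a Y0B by (simp add: vertsG card_blk)
    qed
  qed
  have symG: "adj G u v" if "adj G v u" "u = [a,b]" "v = [c,d]" for u v a b c d
    using that by (simp add: adjG Int_commute)
  have A11: "adj G [h j, blk k (j*k+s)] [h j', blk k (j'*k+s')]"
    if "j<M" "s<k" "j'<M" "s'<k" "[h j, blk k (j*k+s)] \<noteq> [h j', blk k (j'*k+s')]" for j s j' s'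
  proof -
    have "h j \<inter> h j' \<noteq> {}" using hprop(3) that by blast
    moreover have "j*k+s \<noteq> j'*k+s'" using that enc_inj[of s k s' j j'] by auto
    then have "blk k (j*k+s) \<inter> blk k (j'*k+s') = {}" using S1 k0 by blast
    ultimately show ?thesis by (simp add: adjG)
  qed
  have A22: "adj G [B - h j, col k j s] [B - h j', col k j' s']"
    if "j<M" "s<k" "j'<M" "s'<k" "[B - h j, col k j s] \<noteq> [B - h j', col k j' s']" for j s j' s'
  proof -
    have "(B - h j) \<inter> (B - h j') \<noteq> {}" using LC[of "h j" k "h j'"] hprop that by (simp add: B_def)
    moreover have "j \<noteq> j' \<or> s \<noteq> s'" using that by auto
    then have "col k j s \<inter> col k j' s' = {}" using S2 that by blast
    ultimately show ?thesis by (simp add: adjG)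
  qed
  have A12: "adj G [h j, blk k (j*k+s)] [B - h j', col k j' s']"
    if "j<M" "s<k" "j'<M" "s'<k" for j s j' s'
  proof (cases "j = j'")
    case True
    have "h j \<inter> (B - h j') = {}" using True by auto
    moreover have "blk k (j*k+s) \<inter> col k j' s' \<noteq> {}" using S3[of s k s' j j'] that True by simp
    ultimately show ?thesis by (simp add: adjG)
  next
    case False
    then have "h j \<noteq> h j'" using hinj that by blast
    then have "h j \<inter> (B - h j') \<noteq> {}" using LB[of "h j" k "h j'"] hprop that by (simp add: B_def)
    moreover have "blk k (j*k+s) \<inter> col k j' s' = {}" using S3[of s k s' j j'] that False by simp
    ultimately show ?thesis by (simp add: adjG)
  qed
  have A33: "adj G [Y0, blk k (M*k+i)] [Y0, blk k (M*k+i')]"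
    if "[Y0, blk k (M*k+i)] \<noteq> [Y0, blk k (M*k+i')]" for i i'
  proof -
    have "Y0 \<inter> Y0 \<noteq> {}" using Y0B by blast
    moreover have "M*k+i \<noteq> M*k+i'" using that by auto
    then have "blk k (M*k+i) \<inter> blk k (M*k+i') = {}" using S1 k0 by blast
    ultimately show ?thesis by (simp add: adjG)
  qed
  have A13: "adj G [h j, blk k (j*k+s)] [Y0, blk k (M*k+i)]"
    if "j<M" "s<k" for j s i
  proof -
    have "h j \<inter> Y0 \<noteq> {}" using hprop(3)[OF that(1)] Y0B by blast
    moreover have "j*k+s+1 \<le> M*k"
    proof -
      have "j*k+s+1 \<le> j*k+k" using that by simp
      also have "\<dots> = (j+1)*k" by simp
      also have "\<dots> \<le> M*k" using that by (intro mult_le_mono1) simp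
      finally show ?thesis .
    qed
    then have "j*k+s \<noteq> M*k+i" by simp
    then have "blk k (j*k+s) \<inter> blk k (M*k+i) = {}" using S1 k0 by blast
    ultimately show ?thesis by (simp add: adjG)
  qed
  have A23: "adj G [B - h j, col k j s] [Y0, blk k (M*k+i)]"
    if "j<M" "s<k" for j s i
  proof -
    have "Y0 \<inter> (B - h j) \<noteq> {}" using LB[of Y0 k "h j"] hprop[OF that(1)] hY(2)[OF that(1)] Y0B
      by (simp add: B_def)
    moreover have "blk k (M*k+i) \<inter> col k j s = {}" using S4 that by blast
    ultimately show ?thesis by (simp add: adjG Int_commute)
  qed
  have clique: "is_clique G C"
    unfolding is_clique_def
  proof (intro conjI ballI impI)
    show "C \<subseteq> verts G" by (rule V)
    fix x y assume x: "x \<in> C" and y: "y \<in> C" and xy: "x \<noteq> y"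
    from cases_x[OF x] cases_x[OF y] xy show "adj G x y"
      apply (elim disjE exE conjE)
      apply (simp_all only:)
      apply ((rule A11; assumption) | (rule A22; assumption) | (rule A33; assumption) |
          (rule A12; assumption) | (rule A13; assumption) | (rule A23; assumption) |
          (rule symG[OF A12]; (assumption | rule refl)) |
          (rule symG[OF A13]; (assumption | rule refl)) |
          (rule symG[OF A23]; (assumption | rule refl)))+
      done
  qed
  have inj1: "inj_on (\<lambda>(j,s). [h j, blk k (j*k+s)]) ({0..<M} \<times> {0..<k})"
    by (rule inj_onI) (auto dest!: blk_inj[OF k0] dest: enc_inj)
  have inj2: "inj_on (\<lambda>(j,s). [B - h j, col k j s]) ({0..<M} \<times> {0..<k})"
  proof (rule inj_onI)
    fix p p' assume p: "p \<in> {0..<M} \<times> {0..<k}" "p' \<in> {0..<M} \<times> {0..<k}"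
      and e: "(\<lambda>(j,s). [B - h j, col k j s]) p = (\<lambda>(j,s). [B - h j, col k j s]) p'"
    obtain j s j' s' where js: "p = (j,s)" "p' = (j',s')" by (cases p, cases p')
    have "col k j s = col k j' s'" "s < k" "s' < k" using e p js by auto
    then have "j = j' \<and> s = s'" by (intro col_inj)
    then show "p = p'" using js by simp
  qed
  have inj3: "inj_on (\<lambda>i. [Y0, blk k (M*k+i)]) {0..<q}"
    by (rule inj_onI) (auto dest!: blk_inj[OF k0])
  have cC1: "card C1 = M*k" unfolding C1_def using inj1 by (simp add: card_image card_cartesian_product)
  have cC2: "card C2 = M*k" unfolding C2_def using inj2 by (simp add: card_image card_cartesian_product)
  have cC3: "card C3 = q" unfolding C3_def using inj3 by (simp add: card_image)
  have hne: "h j \<noteq> B - h j'" if "j < M" "j' < M" for j j'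
    using hprop(3)[OF that(1)] hprop(3)[OF that(2)] by blast
  have d12: "C1 \<inter> C2 = {}" unfolding C1_def C2_def using hne by fastforce
  have hne1: "[h j, a] \<noteq> [Y0, b]" if "j < M" for j a b using hY(2)[OF that] by simp
  have hne2: "[B - h j, a] \<noteq> [Y0, b]" if "j < M" for j a b
  proof -
    have "B - h j \<noteq> Y0" using hprop(3)[OF that] Y0B(3) by blast
    then show ?thesis by simp
  qed
  have d3: "(C1 \<union> C2) \<inter> C3 = {}" unfolding C1_def C2_def C3_def using hne1 hne2 by fastforce
  have fins: "finite C1" "finite C2" "finite C3" unfolding C1_def C2_def C3_def by auto
  have cC: "card C = 2*M*k + q"
    unfolding C_def using d12 d3 fins cC1 cC2 cC3 by (simp add: card_Un_disjoint)
  have "card C \<le> f 2 n k"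
    unfolding f_def using clique_le[OF fin_verts clique[unfolded G_def]] .
  then have "2*M*k + q \<le> f 2 n k" using cC by simp
  then have "real (2*M*k + q) \<le> real (f 2 n k)" by (rule of_nat_mono)
  moreover have "real (n div k) + real ((2*k) choose k) * real k / 2 - real k = real (2*M*k + q)"
    using NM qeq[symmetric] by (simp add: algebra_simps)
  ultimately show ?thesis by simp
qed

end
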